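(* Let $n\ge 3$ be an odd integer and $(\mathcal{C},\Sigma)$ a tensor $n$-angulated category. Then the Grothendieck group $K_0(\mathcal{C})$ is a commutative ring with multiplication given by $[A][B]=[A\otimes B]$ for objects $A,B$ of $\mathcal{C}$ (in particular this multiplication is well defined).
   Context: All categories are small. Fix an integer $n\ge 3$. Let $\mathcal{C}$ be an additive category with an automorphism $\Sigma$. An $n$-$\Sigma$-sequence in $\mathcal{C}$ is a diagram $A_1\xrightarrow{\alpha_1}A_2\xrightarrow{\alpha_2}\cdots\xrightarrow{\alpha_{n-1}}A_n\xrightarrow{\alpha_n}\Sigma A_1$. Its left rotation is $A_2\xrightarrow{\alpha_2}\cdots\xrightarrow{\alpha_n}\Sigma A_1\xrightarrow{(-1)^n\Sigma\alpha_1}\Sigma A_2$. A morphism from $(A_\bullet,\alpha)$ to $(B_\bullet,\beta)$ is a tuple $(\varphi_1,\dots,\varphi_n)$, $\varphi_i:A_i\to B_i$, with $\beta_i\varphi_i=\varphi_{i+1}\alpha_i$ for $1\le i\le n-1$ and $\beta_n\varphi_n=(\Sigma\varphi_1)\alpha_n$; it is an isomorphism if all $\varphi_i$ are isomorphisms. Direct sums of sequences are taken termwise. $(\mathcal{C},\Sigma)$ is $n$-angulated if it is equipped with a collection $\mathscr N$ of $n$-$\Sigma$-sequences, called $n$-angles, such that: (N1)(a) $\mathscr N$ is closed under direct sums, direct summands and isomorphisms of $n$-$\Sigma$-sequences; (b) for every object $A$, the trivial sequence $A\xrightarrow{1}A\to0\to\cdots\to0\to\Sigma A$ is in $\mathscr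 N$; (c) every morphism $A_1\to A_2$ is the first morphism of some $n$-angle; (N2) an $n$-$\Sigma$-sequence is in $\mathscr N$ iff its left rotation is; (N3) given $n$-angles $(A_\bullet,\alpha),(B_\bullet,\beta)$ and $\varphi_1:A_1\to B_1$, $\varphi_2:A_2\to B_2$ with $\beta_1\varphi_1=\varphi_2\alpha_1$, there exist $\varphi_3,\dots,\varphi_n$ making $(\varphi_1,\dots,\varphi_n)$ a morphism; (N4) in (N3) the $\varphi_i$ can be chosen so that the mapping cone $A_2\oplus B_1\to A_3\oplus B_2\to\cdots\to\Sigma A_1\oplus B_n\to\Sigma A_2\oplus\Sigma B_1$, with maps $\left[\begin{smallmatrix}-\alpha_{i+1}&0\\ \varphi_{i+1}&\beta_i\end{smallmatrix}\right]$ ($1\le i\le n-1$) and last map $\left[\begin{smallmatrix}-\Sigma\alpha_1&0\\ \Sigma\varphi_1&\beta_n\end{smallmatrix}\right]$, is an $n$-angle. Grothendieck group: $F(\mathcal{C})$ is the free abelian group on isomorphism classes $\langle A\rangle$ of objects; for an $n$-angle $A_\bullet$, $\chi(A_\bullet)=\sum_{i=1}^n(-1)^{i+1}\langle A_i\rangle$; $R(\mathcal{C})$ is generated by all $\chi(A_\bullet)$, together with $\langle 0\rangle$ when $n$ is even; $K_0(\mathcal{C})=F(\mathcal{C})/R(\mathcal{C})$, $[A]$ the class of $\langle A\rangle$. An $n$-angulated category $(\mathcal{C},\Sigma)$ is tensor $n$-angulated if it carries a symmetric monoidal (symmetric tensor) structure $(\otimes,I,\alpha,\lambda,\rho,\gamma)$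 with $\otimes$ an additive bifunctor, such that: (1) there are natural isomorphisms $l:A\otimes\Sigma B\to\Sigma(A\otimes B)$ and $r:\Sigma A\otimes B\to\Sigma(A\otimes B)$; (2) for every object $A$, the functors $A\otimes-$ (with $l$) and $-\otimes A$ (with $r$) are $n$-angulated, i.e. for every $n$-angle $A_1\xrightarrow{\alpha_1}\cdots\xrightarrow{\alpha_{n-1}}A_n\xrightarrow{\alpha_n}\Sigma A_1$ the sequences $A\otimes A_1\xrightarrow{1\otimes\alpha_1}\cdots\xrightarrow{1\otimes\alpha_{n-1}}A\otimes A_n\xrightarrow{l\circ(1\otimes\alpha_n)}\Sigma(A\otimes A_1)$ and $A_1\otimes A\xrightarrow{\alpha_1\otimes1}\cdots\xrightarrow{\alpha_{n-1}\otimes 1}A_n\otimes A\xrightarrow{r\circ(\alpha_n\otimes1)}\Sigma(A_1\otimes A)$ are $n$-angles; (3) $\lambda_{\Sigma A}=\Sigma\lambda_A\circ l$ and $\rho_{\Sigma A}=\Sigma\rho_A\circ r$ for all $A$; (4) $\Sigma l\circ r=-\,\Sigma r\circ l$ as maps $\Sigma A\otimes\Sigma B\to\Sigma^2(A\otimes B)$ for all $A,B$. *)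

theory Defs
  imports "HOL-Algebra.Algebra"
begin

section \<open>Additive categories with an automorphism and a tensor structure (data)\<close>

text \<open>A small category is given by a set of objects, hom-sets, composition
  (cmp g f = g o f) and identities.  The additive structure consists of the
  abelian group structure on each hom-set, a chosen zero object and chosen
  biproducts (dsum A B with injections inj1, inj2 and projections prj1, prj2).
  sgo/sgm is the automorphism Sigma on objects/morphisms.  The tensor part
  consists of the bifunctor (tob on objects, tmor on morphisms), the unit,
  associator asc A B C : (A*B)*C -> A*(B*C), unitors lam A : I*A -> A and
  rho A : A*I -> A, symmetry gam A B : A*B -> B*A and the natural isomorphisms
  ltc A B : A * Sigma B -> Sigma(A*B) and rtc A B : Sigma A * B -> Sigma(A*B).\<close>

record ('o,'m) tcat =
  ob :: "'o set"
  hom :: "'o \<Rightarrow> 'o \<Rightarrow> 'm set"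
  cmp :: "'m \<Rightarrow> 'm \<Rightarrow> 'm"
  idm :: "'o \<Rightarrow> 'm"
  madd :: "'m \<Rightarrow> 'm \<Rightarrow> 'm"
  mneg :: "'m \<Rightarrow> 'm"
  mzero :: "'o \<Rightarrow> 'o \<Rightarrow> 'm"
  zobj :: "'o"
  dsum :: "'o \<Rightarrow> 'o \<Rightarrow> 'o"
  inj1 :: "'o \<Rightarrow> 'o \<Rightarrow> 'm"
  inj2 :: "'o \<Rightarrow> 'o \<Rightarrow> 'm"
  prj1 :: "'o \<Rightarrow> 'o \<Rightarrow> 'm"
  prj2 :: "'o \<Rightarrow> 'o \<Rightarrow> 'm"
  sgo :: "'o \<Rightarrow> 'o"
  sgm :: "'m \<Rightarrow> 'm"
  tob :: "'o \<Rightarrow> 'o \<Rightarrow> 'o"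
  tmor :: "'m \<Rightarrow> 'm \<Rightarrow> 'm"
  tunit :: "'o"
  asc :: "'o \<Rightarrow> 'o \<Rightarrow> 'o \<Rightarrow> 'm"
  lam :: "'o \<Rightarrow> 'm"
  rho :: "'o \<Rightarrow> 'm"
  gam :: "'o \<Rightarrow> 'o \<Rightarrow> 'm"
  ltc :: "'o \<Rightarrow> 'o \<Rightarrow> 'm"
  rtc :: "'o \<Rightarrow> 'o \<Rightarrow> 'm"

definition is_category :: "('o,'m) tcat \<Rightarrow> bool" where
  "is_category C \<longleftrightarrow>
    (\<forall>A\<in>ob C. idm C A \<in> hom C A A) \<and>
    (\<forall>A\<in>ob C. \<forall>B\<in>ob C. \<forall>D\<in>ob C. \<forall>f\<in>hom C A B. \<forall>g\<in>hom C B D.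
        cmp C g f \<in> hom C A D) \<and>
    (\<forall>A\<in>ob C. \<forall>B\<in>ob C. \<forall>f\<in>hom C A B.
        cmp C (idm C B) f = f \<and> cmp C f (idm C A) = f) \<and>
    (\<forall>A\<in>ob C. \<forall>B\<in>ob C. \<forall>D\<in>ob C. \<forall>E\<in>ob C.
       \<forall>f\<in>hom C A B. \<forall>g\<in>hom C B D. \<forall>h\<in>hom C D E.
        cmp C h (cmp C g f) = cmp C (cmp C h g) f)"

definition is_preadditive :: "('o,'m) tcat \<Rightarrow> bool" where
  "is_preadditive C \<longleftrightarrow>
    (\<forall>A\<in>ob C. \<forall>B\<in>ob C.
       mzero C A B \<in> hom C A B \<and>
       (\<forall>f\<in>hom C A B. \<forall>g\<in>hom C A B. madd C f g \<in> hom C A B) \<and>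
       (\<forall>f\<in>hom C A B. mneg C f \<in> hom C A B) \<and>
       (\<forall>f\<in>hom C A B. \<forall>g\<in>hom C A B. \<forall>h\<in>hom C A B.
          madd C (madd C f g) h = madd C f (madd C g h)) \<and>
       (\<forall>f\<in>hom C A B. \<forall>g\<in>hom C A B. madd C f g = madd C g f) \<and>
       (\<forall>f\<in>hom C A B. madd C f (mzero C A B) = f) \<and>
       (\<forall>f\<in>hom C A B. madd C f (mneg C f) = mzero C A B)) \<and>
    (\<forall>A\<in>ob C. \<forall>B\<in>ob C. \<forall>D\<in>ob C. \<forall>f\<in>hom C A B. \<forall>f'\<in>hom C A B. \<forall>g\<in>hom C B D.
        cmp C g (madd C f f') = madd C (cmp C g f) (cmp C g f')) \<and>
    (\<forall>A\<in>ob C. \<forall>B\<in>ob C. \<forall>D\<in>ob C. \<forall>f\<in>hom C A B. \<forall>g\<in>hom C B D. \<forall>g'\<in>hom C B D.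
        cmp C (madd C g g') f = madd C (cmp C g f) (cmp C g' f))"

definition is_additive :: "('o,'m) tcat \<Rightarrow> bool" where
  "is_additive C \<longleftrightarrow>
    is_category C \<and> is_preadditive C \<and>
    zobj C \<in> ob C \<and>
    (\<forall>A\<in>ob C. hom C A (zobj C) = {mzero C A (zobj C)} \<and>
               hom C (zobj C) A = {mzero C (zobj C) A}) \<and>
    (\<forall>A\<in>ob C. \<forall>B\<in>ob C.
       dsum C A B \<in> ob C \<and>
       inj1 C A B \<in> hom C A (dsum C A B) \<and> inj2 C A B \<in> hom C B (dsum C A B) \<and>
       prj1 C A B \<in> hom C (dsum C A B) A \<and> prj2 C A B \<in> hom C (dsum C A B) B \<and>
       cmp C (prj1 C A B) (inj1 C A B) = idm C A \<and>
       cmp C (prj2 C A B) (inj2 C A B) = idm C B \<and>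
       cmp C (prj1 C A B) (inj2 C A B) = mzero C B A \<and>
       cmp C (prj2 C A B) (inj1 C A B) = mzero C A B \<and>
       madd C (cmp C (inj1 C A B) (prj1 C A B)) (cmp C (inj2 C A B) (prj2 C A B))
         = idm C (dsum C A B))"

definition is_iso :: "('o,'m) tcat \<Rightarrow> 'o \<Rightarrow> 'o \<Rightarrow> 'm \<Rightarrow> bool" where
  "is_iso C A B f \<longleftrightarrow> f \<in> hom C A B \<and>
     (\<exists>g\<in>hom C B A. cmp C g f = idm C A \<and> cmp C f g = idm C B)"

definition is_sigma_auto :: "('o,'m) tcat \<Rightarrow> bool" where
  "is_sigma_auto C \<longleftrightarrow>
    bij_betw (sgo C) (ob C) (ob C) \<and>
    (\<forall>A\<in>ob C. \<forall>B\<in>ob C. bij_betw (sgm C) (hom C A B) (hom C (sgo C A) (sgo C B))) \<and>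
    (\<forall>A\<in>ob C. sgm C (idm C A) = idm C (sgo C A)) \<and>
    (\<forall>A\<in>ob C. \<forall>B\<in>ob C. \<forall>D\<in>ob C. \<forall>f\<in>hom C A B. \<forall>g\<in>hom C B D.
        sgm C (cmp C g f) = cmp C (sgm C g) (sgm C f)) \<and>
    (\<forall>A\<in>ob C. \<forall>B\<in>ob C. \<forall>f\<in>hom C A B. \<forall>g\<in>hom C A B.
        sgm C (madd C f g) = madd C (sgm C f) (sgm C g))"

section \<open>n-Sigma-sequences\<close>

text \<open>An n-Sigma-sequence A_1 -> ... -> A_n -> Sigma A_1 is represented by a pair
  (X, f) of functions on nat; only the indices 1..n are relevant.\<close>

type_synonym ('o,'m) nseq = "(nat \<Rightarrow> 'o) \<times> (nat \<Rightarrow> 'm)"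

definition is_nseq :: "nat \<Rightarrow> ('o,'m) tcat \<Rightarrow> ('o,'m) nseq \<Rightarrow> bool" where
  "is_nseq n C S \<longleftrightarrow>
    (\<forall>i\<in>{1..n}. fst S i \<in> ob C) \<and>
    (\<forall>i\<in>{1..<n}. snd S i \<in> hom C (fst S i) (fst S (Suc i))) \<and>
    snd S n \<in> hom C (fst S n) (sgo C (fst S 1))"

definition seq_hom :: "nat \<Rightarrow> ('o,'m) tcat \<Rightarrow> ('o,'m) nseq \<Rightarrow> ('o,'m) nseq
    \<Rightarrow> (nat \<Rightarrow> 'm) \<Rightarrow> bool" where
  "seq_hom n C S T \<phi> \<longleftrightarrow>
    (\<forall>i\<in>{1..n}. \<phi> i \<in> hom C (fst S i) (fst T i)) \<and>
    (\<forall>i\<in>{1..<n}. cmp C (snd T i) (\<phi> i) = cmp C (\<phi> (Suc i)) (snd S i)) \<and>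
    cmp C (snd T n) (\<phi> n) = cmp C (sgm C (\<phi> 1)) (snd S n)"

definition seq_iso :: "nat \<Rightarrow> ('o,'m) tcat \<Rightarrow> ('o,'m) nseq \<Rightarrow> ('o,'m) nseq
    \<Rightarrow> (nat \<Rightarrow> 'm) \<Rightarrow> bool" where
  "seq_iso n C S T \<phi> \<longleftrightarrow> seq_hom n C S T \<phi> \<and>
    (\<forall>i\<in>{1..n}. is_iso C (fst S i) (fst T i) (\<phi> i))"

text \<open>Termwise direct sum of two sequences (using the chosen biproducts; the
  last map lands in Sigma of the chosen biproduct of the first terms).\<close>

definition seq_dsum :: "nat \<Rightarrow> ('o,'m) tcat \<Rightarrow> ('o,'m) nseq \<Rightarrow> ('o,'m) nseq
    \<Rightarrow> ('o,'m) nseq" where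
  "seq_dsum n C S T =
    (\<lambda>i. dsum C (fst S i) (fst T i),
     \<lambda>i. if i = n then
          madd C
            (cmp C (sgm C (inj1 C (fst S 1) (fst T 1))) (cmp C (snd S n) (prj1 C (fst S n) (fst T n))))
            (cmp C (sgm C (inj2 C (fst S 1) (fst T 1))) (cmp C (snd T n) (prj2 C (fst S n) (fst T n))))
        else
          madd C
            (cmp C (inj1 C (fst S (Suc i)) (fst T (Suc i))) (cmp C (snd S i) (prj1 C (fst S i) (fst T i))))
            (cmp C (inj2 C (fst S (Suc i)) (fst T (Suc i))) (cmp C (snd T i) (prj2 C (fst S i) (fst T i)))))"

definition triv_obj :: "('o,'m) tcat \<Rightarrow> 'o \<Rightarrow> nat \<Rightarrow> 'o" where
  "triv_obj C A i = (if i \<le> 2 then A else zobj C)"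

definition triv_seq :: "nat \<Rightarrow> ('o,'m) tcat \<Rightarrow> 'o \<Rightarrow> ('o,'m) nseq" where
  "triv_seq n C A =
    (triv_obj C A,
     \<lambda>i. if i = 1 then idm C A
         else if i = n then mzero C (triv_obj C A n) (sgo C A)
         else mzero C (triv_obj C A i) (triv_obj C A (Suc i)))"

definition sign_pow :: "nat \<Rightarrow> ('o,'m) tcat \<Rightarrow> 'm \<Rightarrow> 'm" where
  "sign_pow n C f = (if even n then f else mneg C f)"

definition rot_seq :: "nat \<Rightarrow> ('o,'m) tcat \<Rightarrow> ('o,'m) nseq \<Rightarrow> ('o,'m) nseq" where
  "rot_seq n C S =
    (\<lambda>i. if i < n then fst S (Suc i) else sgo C (fst S 1),
     \<lambda>i. if i < n then snd S (Suc i) else sign_pow n C (sgm C (snd S 1)))"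

text \<open>Mapping cone of a morphism phi : S -> T, with terms A_{i+1} + B_i
  (i < n), Sigma A_1 + B_n, and the matrix maps of the paper (the zero entries
  are omitted).  The last map goes into Sigma(A_2 + B_1), identified with
  Sigma A_2 + Sigma B_1 via Sigma of the biproduct injections.\<close>

definition cone_seq :: "nat \<Rightarrow> ('o,'m) tcat \<Rightarrow> ('o,'m) nseq \<Rightarrow> ('o,'m) nseq
    \<Rightarrow> (nat \<Rightarrow> 'm) \<Rightarrow> ('o,'m) nseq" where
  "cone_seq n C S T \<phi> =
    (let XA = fst (rot_seq n C S); YB = fst T; f = snd S; g = snd T;
         ZC = (\<lambda>i. dsum C (XA i) (YB i)) in
     (ZC, \<lambda>i. if i = n then
          madd C
           (cmp C (sgm C (inj1 C (XA 1) (YB 1))) (cmp C (mneg C (sgm C (f 1))) (prj1 C (XA n) (YB n))))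
           (madd C
             (cmp C (sgm C (inj2 C (XA 1) (YB 1))) (cmp C (sgm C (\<phi> 1)) (prj1 C (XA n) (YB n))))
             (cmp C (sgm C (inj2 C (XA 1) (YB 1))) (cmp C (g n) (prj2 C (XA n) (YB n)))))
        else
          madd C
           (cmp C (inj1 C (XA (Suc i)) (YB (Suc i))) (cmp C (mneg C (f (Suc i))) (prj1 C (XA i) (YB i))))
           (madd C
             (cmp C (inj2 C (XA (Suc i)) (YB (Suc i))) (cmp C (\<phi> (Suc i)) (prj1 C (XA i) (YB i))))
             (cmp C (inj2 C (XA (Suc i)) (YB (Suc i))) (cmp C (g i) (prj2 C (XA i) (YB i)))))))"

section \<open>n-angulated categories\<close>

definition n_angulated :: "nat \<Rightarrow> ('o,'m) tcat \<Rightarrow> ('o,'m) nseq set \<Rightarrow> bool" where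
  "n_angulated n C N \<longleftrightarrow>
    is_additive C \<and> is_sigma_auto C \<and>
    (\<forall>S\<in>N. is_nseq n C S) \<and>
    \<comment> \<open>(N1)(a)\<close>
    (\<forall>S\<in>N. \<forall>T\<in>N. seq_dsum n C S T \<in> N) \<and>
    (\<forall>S T. is_nseq n C S \<and> is_nseq n C T \<and> seq_dsum n C S T \<in> N \<longrightarrow> S \<in> N \<and> T \<in> N) \<and>
    (\<forall>S\<in>N. \<forall>T \<phi>. is_nseq n C T \<and> seq_iso n C S T \<phi> \<longrightarrow> T \<in> N) \<and>
    \<comment> \<open>(N1)(b)\<close>
    (\<forall>A\<in>ob C. triv_seq n C A \<in> N) \<and>
    \<comment> \<open>(N1)(c)\<close>
    (\<forall>A1\<in>ob C. \<forall>A2\<in>ob C. \<forall>f\<in>hom C A1 A2.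
       \<exists>S\<in>N. fst S 1 = A1 \<and> fst S 2 = A2 \<and> snd S 1 = f) \<and>
    \<comment> \<open>(N2)\<close>
    (\<forall>S. is_nseq n C S \<longrightarrow> (S \<in> N \<longleftrightarrow> rot_seq n C S \<in> N)) \<and>
    \<comment> \<open>(N3)\<close>
    (\<forall>S\<in>N. \<forall>T\<in>N. \<forall>\<phi>1 \<phi>2.
       \<phi>1 \<in> hom C (fst S 1) (fst T 1) \<and> \<phi>2 \<in> hom C (fst S 2) (fst T 2) \<and>
       cmp C (snd T 1) \<phi>1 = cmp C \<phi>2 (snd S 1) \<longrightarrow>
       (\<exists>\<phi>. \<phi> 1 = \<phi>1 \<and> \<phi> 2 = \<phi>2 \<and> seq_hom n C S T \<phi>)) \<and>
    \<comment> \<open>(N4)\<close>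
    (\<forall>S\<in>N. \<forall>T\<in>N. \<forall>\<phi>1 \<phi>2.
       \<phi>1 \<in> hom C (fst S 1) (fst T 1) \<and> \<phi>2 \<in> hom C (fst S 2) (fst T 2) \<and>
       cmp C (snd T 1) \<phi>1 = cmp C \<phi>2 (snd S 1) \<longrightarrow>
       (\<exists>\<phi>. \<phi> 1 = \<phi>1 \<and> \<phi> 2 = \<phi>2 \<and> seq_hom n C S T \<phi> \<and> cone_seq n C S T \<phi> \<in> N))"

section \<open>Symmetric monoidal structure and tensor n-angulated categories\<close>

definition is_sym_monoidal :: "('o,'m) tcat \<Rightarrow> bool" where
  "is_sym_monoidal C \<longleftrightarrow>
    tunit C \<in> ob C \<and>
    \<comment> \<open>additive bifunctor\<close>
    (\<forall>A\<in>ob C. \<forall>B\<in>ob C. tob C A B \<in> ob C) \<and>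
    (\<forall>A\<in>ob C. \<forall>A'\<in>ob C. \<forall>B\<in>ob C. \<forall>B'\<in>ob C. \<forall>f\<in>hom C A A'. \<forall>g\<in>hom C B B'.
        tmor C f g \<in> hom C (tob C A B) (tob C A' B')) \<and>
    (\<forall>A\<in>ob C. \<forall>B\<in>ob C. tmor C (idm C A) (idm C B) = idm C (tob C A B)) \<and>
    (\<forall>A\<in>ob C. \<forall>A'\<in>ob C. \<forall>A''\<in>ob C. \<forall>B\<in>ob C. \<forall>B'\<in>ob C. \<forall>B''\<in>ob C.
       \<forall>f\<in>hom C A A'. \<forall>f'\<in>hom C A' A''. \<forall>g\<in>hom C B B'. \<forall>g'\<in>hom C B' B''.
        tmor C (cmp C f' f) (cmp C g' g) = cmp C (tmor C f' g') (tmor C f g)) \<and>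
    (\<forall>A\<in>ob C. \<forall>A'\<in>ob C. \<forall>B\<in>ob C. \<forall>B'\<in>ob C. \<forall>f\<in>hom C A A'. \<forall>f'\<in>hom C A A'. \<forall>g\<in>hom C B B'.
        tmor C (madd C f f') g = madd C (tmor C f g) (tmor C f' g) \<and>
        tmor C g (madd C f f') = madd C (tmor C g f) (tmor C g f')) \<and>
    \<comment> \<open>the structure isomorphisms\<close>
    (\<forall>A\<in>ob C. \<forall>B\<in>ob C. \<forall>D\<in>ob C.
        is_iso C (tob C (tob C A B) D) (tob C A (tob C B D)) (asc C A B D)) \<and>
    (\<forall>A\<in>ob C. is_iso C (tob C (tunit C) A) A (lam C A)) \<and>
    (\<forall>A\<in>ob C. is_iso C (tob C A (tunit C)) A (rho C A)) \<and>
    (\<forall>A\<in>ob C. \<forall>B\<in>ob C. is_iso C (tob C A B) (tob C B A) (gam C A B)) \<and>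
    \<comment> \<open>naturality\<close>
    (\<forall>A\<in>ob C. \<forall>A'\<in>ob C. \<forall>B\<in>ob C. \<forall>B'\<in>ob C. \<forall>D\<in>ob C. \<forall>D'\<in>ob C.
       \<forall>f\<in>hom C A A'. \<forall>g\<in>hom C B B'. \<forall>h\<in>hom C D D'.
        cmp C (asc C A' B' D') (tmor C (tmor C f g) h)
          = cmp C (tmor C f (tmor C g h)) (asc C A B D)) \<and>
    (\<forall>A\<in>ob C. \<forall>A'\<in>ob C. \<forall>f\<in>hom C A A'.
        cmp C f (lam C A) = cmp C (lam C A') (tmor C (idm C (tunit C)) f) \<and>
        cmp C f (rho C A) = cmp C (rho C A') (tmor C f (idm C (tunit C)))) \<and>
    (\<forall>A\<in>ob C. \<forall>A'\<in>ob C. \<forall>B\<in>ob C. \<forall>B'\<in>ob C. \<forall>f\<in>hom C A A'. \<forall>g\<in>hom C B B'.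
        cmp C (tmor C g f) (gam C A B) = cmp C (gam C A' B') (tmor C f g)) \<and>
    \<comment> \<open>coherence: pentagon, triangle, symmetry, hexagon, unit/symmetry\<close>
    (\<forall>A\<in>ob C. \<forall>B\<in>ob C. \<forall>D\<in>ob C. \<forall>E\<in>ob C.
        cmp C (asc C A B (tob C D E)) (asc C (tob C A B) D E)
          = cmp C (tmor C (idm C A) (asc C B D E))
              (cmp C (asc C A (tob C B D) E) (tmor C (asc C A B D) (idm C E)))) \<and>
    (\<forall>A\<in>ob C. \<forall>B\<in>ob C.
        cmp C (tmor C (idm C A) (lam C B)) (asc C A (tunit C) B)
          = tmor C (rho C A) (idm C B)) \<and>
    (\<forall>A\<in>ob C. \<forall>B\<in>ob C. cmp C (gam C B A) (gam C A B) = idm C (tob C A B)) \<and>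
    (\<forall>A\<in>ob C. \<forall>B\<in>ob C. \<forall>D\<in>ob C.
        cmp C (asc C B D A) (cmp C (gam C A (tob C B D)) (asc C A B D))
          = cmp C (tmor C (idm C B) (gam C A D))
              (cmp C (asc C B A D) (tmor C (gam C A B) (idm C D)))) \<and>
    (\<forall>A\<in>ob C. rho C A = cmp C (lam C A) (gam C A (tunit C)))"

definition ltens_seq :: "nat \<Rightarrow> ('o,'m) tcat \<Rightarrow> 'o \<Rightarrow> ('o,'m) nseq \<Rightarrow> ('o,'m) nseq" where
  "ltens_seq n C A S =
    (\<lambda>i. tob C A (fst S i),
     \<lambda>i. if i = n then cmp C (ltc C A (fst S 1)) (tmor C (idm C A) (snd S n))
         else tmor C (idm C A) (snd S i))"

definition rtens_seq :: "nat \<Rightarrow> ('o,'m) tcat \<Rightarrow> 'o \<Rightarrow> ('o,'m) nseq \<Rightarrow> ('o,'m) nseq" where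
  "rtens_seq n C A S =
    (\<lambda>i. tob C (fst S i) A,
     \<lambda>i. if i = n then cmp C (rtc C (fst S 1) A) (tmor C (snd S n) (idm C A))
         else tmor C (snd S i) (idm C A))"

definition tensor_n_angulated :: "nat \<Rightarrow> ('o,'m) tcat \<Rightarrow> ('o,'m) nseq set \<Rightarrow> bool" where
  "tensor_n_angulated n C N \<longleftrightarrow>
    n_angulated n C N \<and> is_sym_monoidal C \<and>
    \<comment> \<open>(1) natural isomorphisms l and r\<close>
    (\<forall>A\<in>ob C. \<forall>B\<in>ob C.
        is_iso C (tob C A (sgo C B)) (sgo C (tob C A B)) (ltc C A B) \<and>
        is_iso C (tob C (sgo C A) B) (sgo C (tob C A B)) (rtc C A B)) \<and>
    (\<forall>A\<in>ob C. \<forall>A'\<in>ob C. \<forall>B\<in>ob C. \<forall>B'\<in>ob C. \<forall>f\<in>hom C A A'. \<forall>g\<in>hom C B B'.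
        cmp C (sgm C (tmor C f g)) (ltc C A B) = cmp C (ltc C A' B') (tmor C f (sgm C g)) \<and>
        cmp C (sgm C (tmor C f g)) (rtc C A B) = cmp C (rtc C A' B') (tmor C (sgm C f) g)) \<and>
    \<comment> \<open>(2) A * - and - * A are n-angulated\<close>
    (\<forall>A\<in>ob C. \<forall>S\<in>N. ltens_seq n C A S \<in> N \<and> rtens_seq n C A S \<in> N) \<and>
    \<comment> \<open>(3)\<close>
    (\<forall>A\<in>ob C. lam C (sgo C A) = cmp C (sgm C (lam C A)) (ltc C (tunit C) A) \<and>
               rho C (sgo C A) = cmp C (sgm C (rho C A)) (rtc C A (tunit C))) \<and>
    \<comment> \<open>(4)\<close>
    (\<forall>A\<in>ob C. \<forall>B\<in>ob C.
        cmp C (sgm C (ltc C A B)) (rtc C A (sgo C B))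
          = mneg C (cmp C (sgm C (rtc C A B)) (ltc C (sgo C A) B)))"

section \<open>Grothendieck group\<close>

definition isoclass :: "('o,'m) tcat \<Rightarrow> 'o \<Rightarrow> 'o set" where
  "isoclass C A = {B\<in>ob C. \<exists>f. is_iso C B A f}"

definition F_grp :: "('o,'m) tcat \<Rightarrow> ('o set \<Rightarrow>\<^sub>0 int) monoid" where
  "F_grp C = free_Abelian_group (isoclass C ` ob C)"

definition chi :: "nat \<Rightarrow> ('o,'m) tcat \<Rightarrow> ('o,'m) nseq \<Rightarrow> ('o set \<Rightarrow>\<^sub>0 int)" where
  "chi n C S = (\<Sum>i=1..n. frag_cmul ((-1) ^ (i+1)) (frag_of (isoclass C (fst S i))))"

definition R_gens :: "nat \<Rightarrow> ('o,'m) tcat \<Rightarrow> ('o,'m) nseq set \<Rightarrow> ('o set \<Rightarrow>\<^sub>0 int) set" where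
  "R_gens n C N = chi n C ` N \<union> (if even n then {frag_of (isoclass C (zobj C))} else {})"

definition R_sub :: "nat \<Rightarrow> ('o,'m) tcat \<Rightarrow> ('o,'m) nseq set \<Rightarrow> ('o set \<Rightarrow>\<^sub>0 int) set" where
  "R_sub n C N = generate (F_grp C) (R_gens n C N)"

definition K0 :: "nat \<Rightarrow> ('o,'m) tcat \<Rightarrow> ('o,'m) nseq set \<Rightarrow> ('o set \<Rightarrow>\<^sub>0 int) set monoid" where
  "K0 n C N = F_grp C Mod R_sub n C N"

definition K0_class :: "nat \<Rightarrow> ('o,'m) tcat \<Rightarrow> ('o,'m) nseq set \<Rightarrow> 'o \<Rightarrow> ('o set \<Rightarrow>\<^sub>0 int) set" where
  "K0_class n C N A = R_sub n C N #>\<^bsub>F_grp C\<^esub> frag_of (isoclass C A)"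

end

theory Submission
  imports Defs
begin


definition orep0 :: "('o,'m) tcat \<Rightarrow> 'o set \<Rightarrow> 'o" where
  "orep0 C U = (SOME A. A \<in> ob C \<and> isoclass C A = U)"
definition otc0 :: "('o,'m) tcat \<Rightarrow> 'o set \<Rightarrow> 'o set \<Rightarrow> 'o set" where
  "otc0 C U V = isoclass C (tob C (orep0 C U) (orep0 C V))"

locale tna =
  fixes n :: nat and C :: "('o,'m) tcat" and N :: "('o,'m) nseq set"
  assumes tna: "tensor_n_angulated n C N"
begin

lemmas TN = tna[unfolded tensor_n_angulated_def]
lemma nang: "n_angulated n C N" using TN by (rule conjunct1)
lemma symm: "is_sym_monoidal C" using TN[THEN conjunct2] by (rule conjunct1)
lemmas NA = nang[unfolded n_angulated_def]
lemma addi: "is_additive C" using NA by (rule conjunct1)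
lemma cat: "is_category C" using addi[unfolded is_additive_def] by (rule conjunct1)
lemmas CA = cat[unfolded is_category_def]

lemma id_hom: "A \<in> ob C \<Longrightarrow> idm C A \<in> hom C A A"
  using CA by blast
lemma cmp_hom: "\<lbrakk>A \<in> ob C; B \<in> ob C; D \<in> ob C; f \<in> hom C A B; g \<in> hom C B D\<rbrakk> \<Longrightarrow> cmp C g f \<in> hom C A D"
  using CA by blast
lemma id_l: "\<lbrakk>A \<in> ob C; B \<in> ob C; f \<in> hom C A B\<rbrakk> \<Longrightarrow> cmp C (idm C B) f = f"
  using CA by blast
lemma id_r: "\<lbrakk>A \<in> ob C; B \<in> ob C; f \<in> hom C A B\<rbrakk> \<Longrightarrow> cmp C f (idm C A) = f"
  using CA by blast
lemma cassoc: "\<lbrakk>A \<in> ob C; B \<in> ob C; D \<in> ob C; E \<in> ob C; f \<in> hom C A B; g \<in> hom C B D; h \<in> hom C D E\<rbrakk>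
   \<Longrightarrow> cmp C h (cmp C g f) = cmp C (cmp C h g) f"
  using CA by blast

lemma iso_refl: "A \<in> ob C \<Longrightarrow> is_iso C A A (idm C A)"
  unfolding is_iso_def using id_hom id_l by blast

lemma iso_sym: "is_iso C A B f \<Longrightarrow> \<exists>g. is_iso C B A g"
  unfolding is_iso_def by blast

lemma iso_trans:
  assumes ob: "A \<in> ob C" "B \<in> ob C" "D \<in> ob C" and f: "is_iso C A B f" and g: "is_iso C B D g"
  shows "is_iso C A D (cmp C g f)"
proof -
  obtain f' where f': "f' \<in> hom C B A" "cmp C f' f = idm C A" "cmp C f f' = idm C B" "f \<in> hom C A B"
    using f unfolding is_iso_def by blast
  obtain g' where g': "g' \<in> hom C D B" "cmp C g' g = idm C B" "cmp C g g' = idm C D" "g \<in> hom C B D"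
    using g unfolding is_iso_def by blast
  have fg': "cmp C f' g' \<in> hom C D A" using cmp_hom[OF ob(3,2,1) g'(1) f'(1)] .
  have gf: "cmp C g f \<in> hom C A D" using cmp_hom[OF ob(1,2,3) f'(4) g'(4)] .
  have h1: "cmp C (cmp C f' g') (cmp C g f) = idm C A"
  proof -
    have "cmp C (cmp C f' g') (cmp C g f) = cmp C (cmp C (cmp C f' g') g) f"
      using cassoc[OF ob(1,2,3,1) f'(4) g'(4) fg'] .
    also have "cmp C (cmp C f' g') g = cmp C f' (cmp C g' g)"
      using cassoc[OF ob(2,3,2,1) g'(4) g'(1) f'(1)] by simp
    also have "\<dots> = f'" using g'(2) id_r[OF ob(2,1) f'(1)] by simp
    finally show ?thesis using f'(2) by simp
  qed
  have h2: "cmp C (cmp C g f) (cmp C f' g') = idm C D"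
  proof -
    have "cmp C (cmp C g f) (cmp C f' g') = cmp C (cmp C (cmp C g f) f') g'"
      using cassoc[OF ob(3,2,1,3) g'(1) f'(1) gf] .
    also have "cmp C (cmp C g f) f' = cmp C g (cmp C f f')"
      using cassoc[OF ob(2,1,2,3) f'(1) f'(4) g'(4)] by simp
    also have "\<dots> = g" using f'(3) id_r[OF ob(2,3) g'(4)] by simp
    finally show ?thesis using g'(3) by simp
  qed
  show ?thesis unfolding is_iso_def
    using h1 h2 gf fg' by blast
qed

lemma iso_sym_ob: "\<lbrakk>A \<in> ob C; B \<in> ob C; is_iso C A B f\<rbrakk> \<Longrightarrow> is_iso C B A (SOME g. is_iso C B A g)"
  using iso_sym by (metis someI)

lemma isoclass_eq:
  assumes ob: "A \<in> ob C" "B \<in> ob C" and f: "is_iso C A B f"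
  shows "isoclass C A = isoclass C B"
proof -
  obtain g where g: "is_iso C B A g" using iso_sym f by blast
  show ?thesis
  proof (rule Set.set_eqI)
    fix X0 show "X0 \<in> isoclass C A \<longleftrightarrow> X0 \<in> isoclass C B"
    proof
      assume "X0 \<in> isoclass C A"
      then obtain h where "X0 \<in> ob C" "is_iso C X0 A h" unfolding isoclass_def by blast
      then show "X0 \<in> isoclass C B" unfolding isoclass_def using iso_trans[OF _ ob _ f] by blast
    next
      assume "X0 \<in> isoclass C B"
      then obtain h where "X0 \<in> ob C" "is_iso C X0 B h" unfolding isoclass_def by blast
      then show "X0 \<in> isoclass C A" unfolding isoclass_def using iso_trans[OF _ ob(2,1) _ g] by blast
    qed
  qed
qed

lemma isoclass_eqD:
  assumes "A \<in> ob C" "B \<in> ob C" "isoclass C A = isoclass C B"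
  shows "\<exists>f. is_iso C A B f"
  using assms iso_refl unfolding isoclass_def by blast

lemmas SMc = symm[unfolded is_sym_monoidal_def]

lemma tob_ob: "\<lbrakk>A \<in> ob C; B \<in> ob C\<rbrakk> \<Longrightarrow> tob C A B \<in> ob C"
  using SMc[THEN conjunct2, THEN conjunct1] by blast
lemma unit_ob: "tunit C \<in> ob C"
  using SMc[THEN conjunct1] by blast
lemma tmor_hom: "\<lbrakk>A \<in> ob C; A' \<in> ob C; B \<in> ob C; B' \<in> ob C; f \<in> hom C A A'; g \<in> hom C B B'\<rbrakk>
   \<Longrightarrow> tmor C f g \<in> hom C (tob C A B) (tob C A' B')"
  using SMc[THEN conjunct2, THEN conjunct2, THEN conjunct1] by blast
lemma tmor_id: "\<lbrakk>A \<in> ob C; B \<in> ob C\<rbrakk> \<Longrightarrow> tmor C (idm C A) (idm C B) = idm C (tob C A B)"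
  using SMc[THEN conjunct2, THEN conjunct2, THEN conjunct2, THEN conjunct1] by blast
lemma tmor_cmp: "\<lbrakk>A \<in> ob C; A' \<in> ob C; A'' \<in> ob C; B \<in> ob C; B' \<in> ob C; B'' \<in> ob C;
   f \<in> hom C A A'; f' \<in> hom C A' A''; g \<in> hom C B B'; g' \<in> hom C B' B''\<rbrakk> \<Longrightarrow>
   tmor C (cmp C f' f) (cmp C g' g) = cmp C (tmor C f' g') (tmor C f g)"
  using SMc[THEN conjunct2, THEN conjunct2, THEN conjunct2, THEN conjunct2, THEN conjunct1] by blast
lemma asc_iso: "\<lbrakk>A \<in> ob C; B \<in> ob C; D \<in> ob C\<rbrakk> \<Longrightarrow>
   is_iso C (tob C (tob C A B) D) (tob C A (tob C B D)) (asc C A B D)"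
  using SMc[THEN conjunct2, THEN conjunct2, THEN conjunct2, THEN conjunct2, THEN conjunct2, THEN conjunct2, THEN conjunct1] by blast
lemma lam_iso: "A \<in> ob C \<Longrightarrow> is_iso C (tob C (tunit C) A) A (lam C A)"
  using SMc[THEN conjunct2, THEN conjunct2, THEN conjunct2, THEN conjunct2, THEN conjunct2, THEN conjunct2, THEN conjunct2, THEN conjunct1] by blast
lemma gam_iso: "\<lbrakk>A \<in> ob C; B \<in> ob C\<rbrakk> \<Longrightarrow> is_iso C (tob C A B) (tob C B A) (gam C A B)"
  using SMc[THEN conjunct2, THEN conjunct2, THEN conjunct2, THEN conjunct2, THEN conjunct2, THEN conjunct2, THEN conjunct2, THEN conjunct2, THEN conjunct2, THEN conjunct1] by blast

lemma tob_iso: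
  assumes ob: "A \<in> ob C" "A' \<in> ob C" "B \<in> ob C" "B' \<in> ob C"
    and f: "is_iso C A A' f" and g: "is_iso C B B' g"
  shows "is_iso C (tob C A B) (tob C A' B') (tmor C f g)"
proof -
  obtain f' where f': "f' \<in> hom C A' A" "cmp C f' f = idm C A" "cmp C f f' = idm C A'" "f \<in> hom C A A'"
    using f unfolding is_iso_def by blast
  obtain g' where g': "g' \<in> hom C B' B" "cmp C g' g = idm C B" "cmp C g g' = idm C B'" "g \<in> hom C B B'"
    using g unfolding is_iso_def by blast
  have "cmp C (tmor C f' g') (tmor C f g) = tmor C (cmp C f' f) (cmp C g' g)"
    using tmor_cmp[of A A' A B B' B f f' g g'] f' g' ob by simp
  also have "\<dots> = idm C (tob C A B)" using f' g' ob tmor_id by simp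
  finally have 1: "cmp C (tmor C f' g') (tmor C f g) = idm C (tob C A B)" .
  have "cmp C (tmor C f g) (tmor C f' g') = tmor C (cmp C f f') (cmp C g g')"
    using tmor_cmp[of A' A A' B' B B' f' f g' g] f' g' ob by simp
  also have "\<dots> = idm C (tob C A' B')" using f' g' ob tmor_id by simp
  finally have 2: "cmp C (tmor C f g) (tmor C f' g') = idm C (tob C A' B')" .
  show ?thesis unfolding is_iso_def
    using 1 2 tmor_hom f' g' ob by blast
qed

abbreviation SS where "SS \<equiv> isoclass C ` ob C"
abbreviation orep where "orep \<equiv> orep0 C"
abbreviation otc where "otc \<equiv> otc0 C"

lemma orep_prop: "U \<in> SS \<Longrightarrow> orep U \<in> ob C \<and> isoclass C (orep U) = U"
  unfolding orep0_def by (rule someI_ex) blast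

lemma otc_class: "\<lbrakk>A \<in> ob C; B \<in> ob C\<rbrakk> \<Longrightarrow> otc (isoclass C A) (isoclass C B) = isoclass C (tob C A B)"
proof -
  assume ob: "A \<in> ob C" "B \<in> ob C"
  have r1: "orep (isoclass C A) \<in> ob C" "isoclass C (orep (isoclass C A)) = isoclass C A"
    using orep_prop[of "isoclass C A"] ob by auto
  have r2: "orep (isoclass C B) \<in> ob C" "isoclass C (orep (isoclass C B)) = isoclass C B"
    using orep_prop[of "isoclass C B"] ob by auto
  obtain f where f: "is_iso C (orep (isoclass C A)) A f" using isoclass_eqD r1 ob by blast
  obtain g where g: "is_iso C (orep (isoclass C B)) B g" using isoclass_eqD r2 ob by blast
  show ?thesis unfolding otc0_def
    using isoclass_eq[OF tob_ob[OF r1(1) r2(1)] tob_ob[OF ob] tob_iso[OF r1(1) ob(1) r2(1) ob(2) f g]] .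
qed

lemma SS_E: "U \<in> SS \<Longrightarrow> (\<And>A. A \<in> ob C \<Longrightarrow> U = isoclass C A \<Longrightarrow> P) \<Longrightarrow> P"
  by blast

lemma otc_SS: "\<lbrakk>U \<in> SS; V \<in> SS\<rbrakk> \<Longrightarrow> otc U V \<in> SS"
proof -
  assume "U \<in> SS" "V \<in> SS"
  then obtain A B where ob: "A \<in> ob C" "B \<in> ob C" and uv: "U = isoclass C A" "V = isoclass C B" by blast
  have "otc U V = isoclass C (tob C A B)" using uv ob otc_class by simp
  then show ?thesis using tob_ob[OF ob] by blast
qed

lemma otc_comm: "\<lbrakk>U \<in> SS; V \<in> SS\<rbrakk> \<Longrightarrow> otc U V = otc V U"
proof -
  assume "U \<in> SS" "V \<in> SS"
  then obtain A B where ob: "A \<in> ob C" "B \<in> ob C" and uv: "U = isoclass C A" "V = isoclass C B" by blast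
  have "otc U V = isoclass C (tob C A B)" using uv ob otc_class by simp
  also have "\<dots> = isoclass C (tob C B A)"
    using isoclass_eq[OF tob_ob[OF ob] tob_ob[OF ob(2,1)] gam_iso[OF ob]] .
  also have "\<dots> = otc V U" using uv ob otc_class by simp
  finally show ?thesis .
qed

lemma otc_assoc: "\<lbrakk>U \<in> SS; V \<in> SS; W \<in> SS\<rbrakk> \<Longrightarrow> otc (otc U V) W = otc U (otc V W)"
proof -
  assume "U \<in> SS" "V \<in> SS" "W \<in> SS"
  then obtain A B D where ob: "A \<in> ob C" "B \<in> ob C" "D \<in> ob C"
    and uv: "U = isoclass C A" "V = isoclass C B" "W = isoclass C D" by blast
  have ab: "tob C A B \<in> ob C" and bd: "tob C B D \<in> ob C" using tob_ob ob by auto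
  have "otc (otc U V) W = isoclass C (tob C (tob C A B) D)" using uv ob otc_class ab by simp
  also have "\<dots> = isoclass C (tob C A (tob C B D))"
    using isoclass_eq[OF tob_ob[OF ab ob(3)] tob_ob[OF ob(1) bd] asc_iso[OF ob]] .
  also have "\<dots> = otc U (otc V W)" using uv ob otc_class bd by simp
  finally show ?thesis .
qed

lemma otc_unit: "U \<in> SS \<Longrightarrow> otc (isoclass C (tunit C)) U = U"
proof -
  assume "U \<in> SS"
  then obtain A where ob: "A \<in> ob C" and uv: "U = isoclass C A" by blast
  have "otc (isoclass C (tunit C)) U = isoclass C (tob C (tunit C) A)" using uv ob otc_class unit_ob by simp
  also have "\<dots> = U" using isoclass_eq[OF tob_ob[OF unit_ob ob] ob lam_iso[OF ob]] uv by simp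
  finally show ?thesis .
qed

end



definition mm0 :: "('o,'m) tcat \<Rightarrow> ('o set \<Rightarrow>\<^sub>0 int) \<Rightarrow> ('o set \<Rightarrow>\<^sub>0 int) \<Rightarrow> ('o set \<Rightarrow>\<^sub>0 int)" where
  "mm0 C x y = frag_extend (\<lambda>U. frag_extend (\<lambda>V. frag_of (otc0 C U V)) y) x"

lemma fe_add_fun: "frag_extend (\<lambda>U. f U + g U) x = frag_extend f x + frag_extend g x"
  unfolding frag_extend_def by (simp add: frag_cmul_distrib2 sum.distrib)
lemma frag_cmul_uminus2: "frag_cmul c (- a) = - frag_cmul c a"
  by (rule poly_mapping_eqI) simp
lemma fe_minus_fun: "frag_extend (\<lambda>U. - f U) x = - frag_extend f x"
proof -
  have "frag_extend f x + frag_extend (\<lambda>U. - f U) x = 0"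
    using fe_add_fun[of f "\<lambda>U. - f U" x] by (simp add: frag_extend_eq_0)
  then show ?thesis by (simp add: add_eq_0_iff)
qed
lemma fe_diff_fun: "frag_extend (\<lambda>U. f U - g U) x = frag_extend f x - frag_extend g x"
  using fe_add_fun[of f "\<lambda>U. - g U" x] fe_minus_fun[of g x] by simp
lemma fe_zero_fun: "frag_extend (\<lambda>U. 0) x = 0"
  by (rule frag_extend_eq_0) simp

lemma mm_0l[simp]: "mm0 C 0 y = 0" by (simp add: mm0_def)
lemma mm_0r[simp]: "mm0 C x 0 = 0" by (simp add: mm0_def fe_zero_fun)
lemma mm_addl: "mm0 C (a + b) y = mm0 C a y + mm0 C b y" by (simp add: mm0_def frag_extend_add)
lemma mm_diffl: "mm0 C (a - b) y = mm0 C a y - mm0 C b y" by (simp add: mm0_def frag_extend_diff)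
lemma mm_addr: "mm0 C x (a + b) = mm0 C x a + mm0 C x b" by (simp add: mm0_def frag_extend_add fe_add_fun)
lemma mm_diffr: "mm0 C x (a - b) = mm0 C x a - mm0 C x b" by (simp add: mm0_def frag_extend_diff fe_diff_fun)
lemma mm_minusl: "mm0 C (- a) y = - mm0 C a y" by (simp add: mm0_def frag_extend_minus)
lemma mm_ofl: "mm0 C (frag_of U) y = frag_extend (\<lambda>V. frag_of (otc0 C U V)) y" by (simp add: mm0_def)
lemma mm_ofr: "mm0 C x (frag_of V) = frag_extend (\<lambda>U. frag_of (otc0 C U V)) x" by (simp add: mm0_def)

context tna begin

abbreviation mm where "mm \<equiv> mm0 C"

lemma mm_keys: assumes "Poly_Mapping.keys x \<subseteq> SS" "Poly_Mapping.keys y \<subseteq> SS" shows "Poly_Mapping.keys (mm x y) \<subseteq> SS"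
  using assms(1) proof (induction x rule: frag_induction)
  case zero then show ?case by simp
next
  case (one U)
  have "\<forall>V\<in>Poly_Mapping.keys y. otc U V \<in> SS" using one assms(2) otc_SS by blast
  then show ?case unfolding mm_ofl using keys_frag_extend[of "\<lambda>V. frag_of (otc U V)" y]
    by (auto simp: keys_frag_of)
next
  case (diff a b)
  then show ?case using keys_diff[of "mm a y" "mm b y"] by (auto simp: mm_diffl)
qed

lemma mm_comm: assumes "Poly_Mapping.keys x \<subseteq> SS" "Poly_Mapping.keys y \<subseteq> SS" shows "mm x y = mm y x"
  using assms(1) proof (induction x rule: frag_induction)
  case zero then show ?case by simp
next
  case (one U)
  show ?case unfolding mm_ofl mm_ofr
    by (rule frag_extend_eq) (use one otc_comm assms(2) in auto)
next
  case (diff a b)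
  then show ?case by (simp add: mm_diffl mm_diffr)
qed

lemma mm_of_of: "mm (frag_of U) (frag_of V) = frag_of (otc U V)"
  by (simp add: mm_ofl)

lemma mm_assoc: assumes "Poly_Mapping.keys x \<subseteq> SS" "Poly_Mapping.keys y \<subseteq> SS" "Poly_Mapping.keys z \<subseteq> SS" shows "mm (mm x y) z = mm x (mm y z)"
  using assms(1) proof (induction x rule: frag_induction)
  case zero then show ?case by simp
next
  case (one U)
  show ?case using assms(2)
  proof (induction y rule: frag_induction)
    case zero then show ?case by simp
  next
    case (diff a b) then show ?case by (simp add: mm_diffl mm_diffr)
  next
    case (one V)
    have "mm (mm (frag_of U) (frag_of V)) z = frag_extend (\<lambda>W. frag_of (otc (otc U V) W)) z"
      by (simp add: mm_ofl)
    also have "\<dots> = frag_extend ((\<lambda>W. frag_of (otc U W)) o otc V) z"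
      by (rule frag_extend_eq) (use one \<open>U \<in> SS\<close> assms(3) otc_assoc in auto)
    also have "\<dots> = frag_extend (\<lambda>W. frag_of (otc U W)) (frag_extend (frag_of o otc V) z)"
      by (rule frag_extend_compose[symmetric])
    also have "\<dots> = mm (frag_of U) (mm (frag_of V) z)"
      by (simp add: mm_ofl comp_def)
    finally show ?case .
  qed
next
  case (diff a b)
  then show ?case by (simp add: mm_diffl)
qed

lemma mm_unit: assumes "Poly_Mapping.keys x \<subseteq> SS" shows "mm (frag_of (isoclass C (tunit C))) x = x"
  using assms proof (induction x rule: frag_induction)
  case zero then show ?case by simp
next
  case (one U) then show ?case by (simp add: mm_ofl otc_unit)
next
  case (diff a b) then show ?case by (simp add: mm_diffr)
qed

definition Fr :: "('o set \<Rightarrow>\<^sub>0 int) ring" where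
  "Fr = \<lparr>carrier = carrier (F_grp C), monoid.mult = mm, one = frag_of (isoclass C (tunit C)),
         ring.zero = 0, ring.add = (+)\<rparr>"

lemma carrier_F: "carrier (F_grp C) = {c. Poly_Mapping.keys c \<subseteq> SS}"
  by (simp add: F_grp_def free_Abelian_group_def)

lemma add_monoid_Fr: "add_monoid Fr = F_grp C"
  by (simp add: Fr_def F_grp_def free_Abelian_group_def)

lemma cring_Fr: "cring Fr"
proof (rule cringI)
  show "abelian_group Fr"
    apply (rule comm_group_abelian_groupI)
    apply (subst add_monoid_Fr)
    by (simp add: F_grp_def abelian_free_Abelian_group)
  show "comm_monoid Fr"
    by (rule comm_monoidI)
       (auto simp: Fr_def carrier_F mm_keys mm_assoc mm_unit keys_frag_of unit_ob intro: mm_comm)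
  show "\<And>x y z. x \<in> carrier Fr \<Longrightarrow> y \<in> carrier Fr \<Longrightarrow> z \<in> carrier Fr \<Longrightarrow>
      (x \<oplus>\<^bsub>Fr\<^esub> y) \<otimes>\<^bsub>Fr\<^esub> z = x \<otimes>\<^bsub>Fr\<^esub> z \<oplus>\<^bsub>Fr\<^esub> y \<otimes>\<^bsub>Fr\<^esub> z"
    by (simp add: Fr_def mm_addl)
qed


lemma carrier_Fr: "carrier Fr = {c. Poly_Mapping.keys c \<subseteq> SS}"
  by (simp add: Fr_def carrier_F)

lemma nseqs: "S \<in> N \<Longrightarrow> is_nseq n C S"
  using NA[THEN conjunct2, THEN conjunct2, THEN conjunct1] by blast

lemma tens_closed: "A \<in> ob C \<Longrightarrow> S \<in> N \<Longrightarrow> rtens_seq n C A S \<in> N"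
  using TN[THEN conjunct2, THEN conjunct2, THEN conjunct2, THEN conjunct2, THEN conjunct1] by blast

lemma chi_ob: "S \<in> N \<Longrightarrow> i \<in> {1..n} \<Longrightarrow> fst S i \<in> ob C"
  using nseqs unfolding is_nseq_def by blast

lemma chi_carrier: assumes S: "S \<in> N" shows "chi n C S \<in> carrier (F_grp C)"
  unfolding chi_def F_grp_def
proof (rule sum_closed_free_Abelian_group)
  fix i assume i: "i \<in> {1..n}"
  have "fst S i \<in> ob C" using chi_ob[OF S i] .
  then have "isoclass C (fst S i) \<in> SS" by blast
  then show "frag_cmul ((-1) ^ (i+1)) (frag_of (isoclass C (fst S i))) \<in> carrier (free_Abelian_group SS)"
    using keys_cmul[of "(-1) ^ (i+1)" "frag_of (isoclass C (fst S i))"] by (auto simp: keys_frag_of)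
qed

lemma chi_tens:
  assumes S: "S \<in> N" and B: "B \<in> ob C"
  shows "mm (chi n C S) (frag_of (isoclass C B)) = chi n C (rtens_seq n C B S)"
proof -
  have "mm (chi n C S) (frag_of (isoclass C B))
     = (\<Sum>i=1..n. frag_cmul ((-1) ^ (i+1)) (frag_of (otc (isoclass C (fst S i)) (isoclass C B))))"
    unfolding chi_def mm_ofr by (simp add: frag_extend_sum frag_extend_cmul comp_def)
  also have "\<dots> = chi n C (rtens_seq n C B S)"
    unfolding chi_def rtens_seq_def
    by (rule sum.cong) (use chi_ob[OF S] otc_class B in auto)
  finally show ?thesis .
qed

lemma grpF: "group (F_grp C)" by (simp add: F_grp_def)

lemma inv_F: "x \<in> carrier (F_grp C) \<Longrightarrow> inv\<^bsub>F_grp C\<^esub> x = - x"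
  unfolding F_grp_def by simp

context
  assumes odd: "odd n"
begin

lemma gens: "R_gens n C N = chi n C ` N"
  using odd by (simp add: R_gens_def)

lemma gens_carrier: "R_gens n C N \<subseteq> carrier (F_grp C)"
  using gens chi_carrier by auto

lemma sgR: "subgroup (R_sub n C N) (F_grp C)"
  unfolding R_sub_def by (rule group.generate_is_subgroup[OF grpF gens_carrier])

lemma R_carr: "R_sub n C N \<subseteq> carrier (F_grp C)"
  by (rule subgroup.subset[OF sgR])

lemma R_zero: "0 \<in> R_sub n C N"
proof -
  have "\<one>\<^bsub>F_grp C\<^esub> \<in> R_sub n C N" by (rule subgroup.one_closed[OF sgR])
  then show ?thesis by (simp only: F_grp_def one_free_Abelian_group)
qed

lemma R_diff: assumes p: "p \<in> R_sub n C N" and q: "q \<in> R_sub n C N" shows "p - q \<in> R_sub n C N"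
proof -
  have qc: "q \<in> carrier (F_grp C)" using R_carr q by blast
  have "inv\<^bsub>F_grp C\<^esub> q \<in> R_sub n C N" using subgroup.m_inv_closed[OF sgR q] .
  then have mq: "- q \<in> R_sub n C N" by (simp only: inv_F[OF qc])
  have "p \<otimes>\<^bsub>F_grp C\<^esub> (- q) \<in> R_sub n C N" using subgroup.m_closed[OF sgR p mq] .
  then show ?thesis by (simp add: F_grp_def)
qed

lemma R_add: assumes p: "p \<in> R_sub n C N" and q: "q \<in> R_sub n C N" shows "p + q \<in> R_sub n C N"
proof -
  have "0 - q \<in> R_sub n C N" by (rule R_diff[OF R_zero q])
  then have "p - (0 - q) \<in> R_sub n C N" by (rule R_diff[OF p])
  then show ?thesis by simp
qed

lemma R_gen_mult:
  assumes h: "h \<in> R_gens n C N" and x: "Poly_Mapping.keys x \<subseteq> SS"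
  shows "mm h x \<in> R_sub n C N"
  using x
proof (induction x rule: frag_induction)
  case zero then show ?case using R_zero by simp
next
  case (one V)
  then obtain B where B: "B \<in> ob C" "V = isoclass C B" by blast
  obtain S where S: "S \<in> N" "h = chi n C S" using h gens by blast
  have "mm h (frag_of V) = chi n C (rtens_seq n C B S)" using chi_tens S B by simp
  also have "\<dots> \<in> R_sub n C N" unfolding R_sub_def
    using gens tens_closed[OF B(1) S(1)] by (auto intro: generate.incl)
  finally show ?case .
next
  case (diff a b) then show ?case by (simp add: mm_diffr R_diff)
qed

lemma R_mult:
  assumes a: "a \<in> R_sub n C N" and x: "Poly_Mapping.keys x \<subseteq> SS"
  shows "mm a x \<in> R_sub n C N"
  using a unfolding R_sub_def
proof (induction a rule: generate.induct)
  case one then show ?case using R_zero by (simp add: F_grp_def R_sub_def)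
next
  case (incl h) then show ?case using R_gen_mult x by (simp add: R_sub_def)
next
  case (inv h)
  have hc: "h \<in> carrier (F_grp C)" using gens_carrier inv by blast
  have mh: "mm h x \<in> R_sub n C N" using R_gen_mult x inv by blast
  have "mm (inv\<^bsub>F_grp C\<^esub> h) x = 0 - mm h x" using inv_F[OF hc] by (simp add: mm_minusl)
  then show ?case using R_diff[OF R_zero mh] by (simp add: R_sub_def)
next
  case (eng h1 h2) then show ?case using R_add by (simp add: F_grp_def mm_addl R_sub_def)
qed

lemma ideal_R: "ideal (R_sub n C N) Fr"
proof (rule idealI)
  show "ring Fr" using cring_Fr cring.axioms(1) by blast
  show "subgroup (R_sub n C N) (add_monoid Fr)" by (subst add_monoid_Fr) (rule sgR)
  show "\<And>a x. a \<in> R_sub n C N \<Longrightarrow> x \<in> carrier Fr \<Longrightarrow> x \<otimes>\<^bsub>Fr\<^esub> a \<in> R_sub n C N"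
  proof -
    fix a x assume a: "a \<in> R_sub n C N" and x: "x \<in> carrier Fr"
    have ak: "Poly_Mapping.keys a \<subseteq> SS" using a R_carr carrier_F by blast
    have "x \<otimes>\<^bsub>Fr\<^esub> a = mm a x" using mm_comm[OF ak] x by (simp add: Fr_def carrier_F)
    then show "x \<otimes>\<^bsub>Fr\<^esub> a \<in> R_sub n C N" using R_mult[OF a] x by (simp add: carrier_Fr)
  qed
  show "\<And>a x. a \<in> R_sub n C N \<Longrightarrow> x \<in> carrier Fr \<Longrightarrow> a \<otimes>\<^bsub>Fr\<^esub> x \<in> R_sub n C N"
    using R_mult by (simp add: Fr_def carrier_F)
qed

end

end

lemma main:
  fixes n :: nat and C :: "('o,'m) tcat" and N :: "('o,'m) nseq set"
  assumes "n \<ge> 3" and odd: "odd n"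
    and tn: "tensor_n_angulated n C N"
  shows "\<exists>Rg :: ('o set \<Rightarrow>\<^sub>0 int) set ring.
           cring Rg \<and>
           carrier Rg = carrier (K0 n C N) \<and>
           (\<oplus>\<^bsub>Rg\<^esub>) = (\<otimes>\<^bsub>K0 n C N\<^esub>) \<and>
           \<zero>\<^bsub>Rg\<^esub> = \<one>\<^bsub>K0 n C N\<^esub> \<and>
           (\<forall>A\<in>ob C. \<forall>B\<in>ob C.
              K0_class n C N A \<otimes>\<^bsub>Rg\<^esub> K0_class n C N B = K0_class n C N (tob C A B))"
proof -
  interpret tna n C N by (rule tna.intro[OF tn])
  let ?R = "R_sub n C N"
  interpret I: ideal ?R Fr by (rule ideal_R[OF odd])
  have cr: "cring (Fr Quot ?R)" by (rule I.quotient_is_cring[OF cring_Fr])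
  have am: "add_monoid Fr = F_grp C" by (rule add_monoid_Fr)
  have "carrier (Fr Quot ?R) = RCOSETS (add_monoid Fr) ?R"
    by (simp add: FactRing_def A_RCOSETS_def)
  then have carr: "carrier (Fr Quot ?R) = carrier (K0 n C N)"
    by (simp only: am) (simp add: K0_def FactGroup_def)
  have "(\<oplus>\<^bsub>Fr Quot ?R\<^esub>) = set_mult (add_monoid Fr)"
    by (simp add: FactRing_def set_add_def)
  then have add: "(\<oplus>\<^bsub>Fr Quot ?R\<^esub>) = (\<otimes>\<^bsub>K0 n C N\<^esub>)"
    by (simp only: am) (simp add: K0_def FactGroup_def)
  have zero: "\<zero>\<^bsub>Fr Quot ?R\<^esub> = \<one>\<^bsub>K0 n C N\<^esub>"
    by (simp add: FactRing_def K0_def FactGroup_def)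
  have cls: "K0_class n C N A = ?R +>\<^bsub>Fr\<^esub> frag_of (isoclass C A)" for A
    unfolding K0_class_def a_r_coset_def am ..
  have prod: "K0_class n C N A \<otimes>\<^bsub>Fr Quot ?R\<^esub> K0_class n C N B = K0_class n C N (tob C A B)"
    if A: "A \<in> ob C" and B: "B \<in> ob C" for A B
  proof -
    have ca: "frag_of (isoclass C A) \<in> carrier Fr" using A by (simp add: carrier_Fr keys_frag_of)
    have cb: "frag_of (isoclass C B) \<in> carrier Fr" using B by (simp add: carrier_Fr keys_frag_of)
    have "K0_class n C N A \<otimes>\<^bsub>Fr Quot ?R\<^esub> K0_class n C N B
        = [mod ?R:] (?R +>\<^bsub>Fr\<^esub> frag_of (isoclass C A)) \<Otimes>\<^bsub>Fr\<^esub> (?R +>\<^bsub>Fr\<^esub> frag_of (isoclass C B))"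
      by (simp add: cls FactRing_def)
    also have "\<dots> = ?R +>\<^bsub>Fr\<^esub> (frag_of (isoclass C A) \<otimes>\<^bsub>Fr\<^esub> frag_of (isoclass C B))"
      by (rule I.rcoset_mult_add[OF ca cb])
    also have "frag_of (isoclass C A) \<otimes>\<^bsub>Fr\<^esub> frag_of (isoclass C B) = frag_of (isoclass C (tob C A B))"
      using A B by (simp add: Fr_def mm_of_of otc_class)
    finally show ?thesis by (simp add: cls)
  qed
  show ?thesis
    by (rule exI[of _ "Fr Quot ?R"]) (use cr carr add zero prod in auto)
qed


theorem lemma5p1:
  fixes n :: nat and C :: "('o,'m) tcat" and N :: "('o,'m) nseq set"
  assumes "n \<ge> 3" and "odd n"
    and "tensor_n_angulated n C N"
  shows "\<exists>Rg :: ('o set \<Rightarrow>\<^sub>0 int) set ring.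
           cring Rg \<and>
           carrier Rg = carrier (K0 n C N) \<and>
           (\<oplus>\<^bsub>Rg\<^esub>) = (\<otimes>\<^bsub>K0 n C N\<^esub>) \<and>
           \<zero>\<^bsub>Rg\<^esub> = \<one>\<^bsub>K0 n C N\<^esub> \<and>
           (\<forall>A\<in>ob C. \<forall>B\<in>ob C.
              K0_class n C N A \<otimes>\<^bsub>Rg\<^esub> K0_class n C N B = K0_class n C N (tob C A B))"
    using main[OF assms] .

end
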